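(* Let $a>0$, $b>0$ and $f(x)=a^2\left(\frac{1+b^2x}{b^2+x}\right)^2$ on $(0,\infty)$. 1) If $b>1$, then for every $x_0>0$ the sequence $x_n=f(x_{n-1})$, $n\ge1$, converges (to a fixed point of $f$). 2) If $b<1$, then for every $y_0>0$ the sequence $y_n=g(y_{n-1})$, $n\ge1$, converges, where $g=f\circ f$. *)

theory Defs
  imports Complex_Main
begin

definition lemma4_f :: "real \<Rightarrow> real \<Rightarrow> real \<Rightarrow> real" where
  "lemma4_f a b x = a^2 * ((1 + b^2 * x) / (b^2 + x))^2"

end

theory Submission
  imports Defs
begin

lemma iter_conv:
  fixes F :: "real \<Rightarrow> real"
  assumes mono: "\<And>x y. 0<x \<Longrightarrow> x \<le> y \<Longrightarrow> F x \<le> F y"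
    and pos: "\<And>x. 0<x \<Longrightarrow> lo \<le> F x" "lo > 0"
    and up: "\<And>x. 0<x \<Longrightarrow> F x \<le> M"
    and x0: "x0 > 0"
  shows "convergent (\<lambda>n. (F^^n) x0) \<and> (\<forall>n. min x0 lo \<le> (F^^n) x0)"
proof -
  define s where "s n = (F^^n) x0" for n
  have sS: "s (Suc n) = F (s n)" for n by (simp add: s_def)
  have sp: "0 < s n" for n
  proof (induction n)
    case 0 then show ?case using x0 by (simp add: s_def)
  next
    case (Suc n) then show ?case using pos sS by (metis less_le_trans)
  qed
  have lb: "min x0 lo \<le> s n" for n
    using pos x0 sp by (cases n) (auto simp: s_def min.coboundedI2)
  have ub: "s n \<le> max x0 M" for n
    using up x0 sp by (cases n) (auto simp: s_def intro: le_max_iff_disj[THEN iffD2])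
  have B: "Bseq s"
  proof (rule BseqI')
    fix n show "norm (s n) \<le> max x0 M" using ub[of n] sp[of n] by simp
  qed
  have "monoseq s"
  proof (cases "s 0 \<le> s 1")
    case True
    have "s n \<le> s (Suc n)" for n
    proof (induction n)
      case 0 then show ?case using True by simp
    next
      case (Suc n) then show ?case using mono sp sS by metis
    qed
    then show ?thesis by (simp add: monoseq_Suc)
  next
    case False
    have "s (Suc n) \<le> s n" for n
    proof (induction n)
      case 0 then show ?case using False by simp
    next
      case (Suc n) then show ?case using mono sp sS by metis
    qed
    then show ?thesis by (simp add: monoseq_Suc)
  qed
  with B have "convergent s" by (rule Bseq_monoseq_convergent)
  then show ?thesis using lb unfolding s_def by auto
qed

lemma h_mono:
  fixes c x y :: real
  assumes "c > 1" "0 < x" "x \<le> y"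
  shows "(1 + c*x)/(c+x) \<le> (1 + c*y)/(c+y)"
proof -
  have "(1 + c*x)*(c+y) \<le> (1 + c*y)*(c+x)"
  proof -
    have "0 \<le> (c*c - 1)*(y-x)" using assms by (intro mult_nonneg_nonneg) (auto simp: mult_mono[of 1 c 1 c, simplified])
    then show ?thesis by (simp add: algebra_simps)
  qed
  then show ?thesis using assms by (simp add: divide_simps)
qed

lemma h_anti:
  fixes c x y :: real
  assumes "0 < c" "c < 1" "0 < x" "x \<le> y"
  shows "(1 + c*y)/(c+y) \<le> (1 + c*x)/(c+x)"
proof -
  have "(1 + c*y)*(c+x) \<le> (1 + c*x)*(c+y)"
  proof -
    have "c*c < 1*1" using assms by (intro mult_strict_mono) auto
    then have "0 \<le> (1 - c*c)*(y-x)" using assms by (intro mult_nonneg_nonneg) auto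
    then show ?thesis by (simp add: algebra_simps)
  qed
  then show ?thesis using assms by (simp add: divide_simps)
qed

theorem lemma4:
  fixes a b :: real
  assumes "a > 0" and "b > 0"
  shows "(b > 1 \<longrightarrow> (\<forall>x0 > 0. \<exists>L. (\<lambda>n. (lemma4_f a b ^^ n) x0) \<longlonglongrightarrow> L
                                   \<and> L > 0 \<and> lemma4_f a b L = L))
       \<and> (b < 1 \<longrightarrow> (\<forall>y0 > 0. convergent (\<lambda>n. ((lemma4_f a b \<circ> lemma4_f a b) ^^ n) y0)))"
proof -
  define c where "c = b^2"
  have c0: "c > 0" using assms by (simp add: c_def)
  have fdef: "lemma4_f a b x = a^2 * ((1 + c*x)/(c+x))^2" for x
    by (simp add: lemma4_f_def c_def)
  have hpos: "0 < (1 + c*x)/(c+x)" if "x > 0" for x using that c0 by (intro divide_pos_pos add_pos_pos) auto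
  have fpos: "0 < lemma4_f a b x" if "x > 0" for x using hpos[OF that] assms unfolding fdef by (intro mult_pos_pos zero_less_power) auto
  show ?thesis
  proof (intro conjI impI allI)
    fix x0 :: real assume b1: "b > 1" and x0: "x0 > 0"
    have c1: "c > 1" using b1 by (simp add: c_def one_less_power)
    have cc: "1 \<le> c*c" using c1 mult_mono[of 1 c 1 c] by simp
    let ?F = "lemma4_f a b"
    have m: "?F x \<le> ?F y" if "0<x" "x\<le>y" for x y
    proof -
      have "((1+c*x)/(c+x))^2 \<le> ((1+c*y)/(c+y))^2"
        by (rule power_mono[OF h_mono[OF c1 that] less_imp_le[OF hpos[OF that(1)]]])
      then show ?thesis unfolding fdef by (rule mult_left_mono) simp
    qed
    have lo: "a^2 * (1/c)^2 \<le> ?F x" if "0<x" for x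
    proof -
      have "1/c \<le> (1 + c*x)/(c+x)" using that c1 cc
        by (simp add: divide_simps) (simp add: algebra_simps)
      then show ?thesis unfolding fdef using c0 by (intro mult_left_mono power_mono) auto
    qed
    have hi: "?F x \<le> a^2 * c^2" if "0<x" for x
    proof -
      have "(1 + c*x)/(c+x) \<le> c" using that c1 cc
        by (simp add: divide_simps) (simp add: algebra_simps)
      then show ?thesis unfolding fdef using hpos[OF that] by (intro mult_left_mono power_mono) auto
    qed
    have lop: "a^2 * (1/c)^2 > 0" using assms c0 by simp
    from iter_conv[of ?F, OF m lo lop hi x0]
    obtain L where L: "(\<lambda>n. (?F^^n) x0) \<longlonglongrightarrow> L" and lb: "\<forall>n. min x0 (a^2 * (1/c)^2) \<le> (?F^^n) x0"
      by (auto simp: convergent_def)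
    have Lpos: "L > 0"
    proof -
      have "min x0 (a^2 * (1/c)^2) \<le> L"
        by (rule LIMSEQ_le_const[OF L]) (use lb in auto)
      then show ?thesis using x0 lop by linarith
    qed
    have "isCont ?F L"
    proof -
      have "c + L \<noteq> 0" using c0 Lpos by simp
      then show ?thesis unfolding fdef[abs_def] by (intro continuous_intros) auto
    qed
    then have "(\<lambda>n. ?F ((?F^^n) x0)) \<longlonglongrightarrow> ?F L" using L isCont_tendsto_compose by blast
    moreover have "(\<lambda>n. ?F ((?F^^n) x0)) \<longlonglongrightarrow> L"
      using LIMSEQ_Suc[OF L] by simp
    ultimately have "?F L = L" by (rule LIMSEQ_unique)
    then show "\<exists>L. (\<lambda>n. (?F ^^ n) x0) \<longlonglongrightarrow> L \<and> L > 0 \<and> ?F L = L" using L Lpos by blast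
  next
    fix y0 :: real assume b1: "b < 1" and y0: "y0 > 0"
    have c1: "c < 1" using b1 assms by (simp add: c_def power_less_one_iff)
    have cc: "c*c \<le> 1" using c0 c1 by (intro mult_le_one) auto
    let ?F = "lemma4_f a b"
    have m: "?F y \<le> ?F x" if "0<x" "x\<le>y" for x y
    proof -
      have "((1+c*y)/(c+y))^2 \<le> ((1+c*x)/(c+x))^2"
        by (rule power_mono[OF h_anti[OF c0 c1 that] less_imp_le[OF hpos]]) (use that in auto)
      then show ?thesis unfolding fdef by (rule mult_left_mono) simp
    qed
    have hi: "?F x \<le> a^2 * (1/c)^2" if "0<x" for x
    proof -
      have "(1 + c*x)/(c+x) \<le> 1/c" using that c1 c0 cc
        by (simp add: divide_simps) (simp add: algebra_simps)
      then show ?thesis unfolding fdef using hpos[OF that] by (intro mult_left_mono power_mono) auto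
    qed
    have m2: "(?F \<circ> ?F) x \<le> (?F \<circ> ?F) y" if "0<x" "x\<le>y" for x y
      using m[OF fpos[OF order.strict_trans2[OF that(1) that(2)]] m[OF that]] by simp
    have lo: "a^2 * c^2 \<le> ?F x" if "0<x" for x
    proof -
      have "c \<le> (1 + c*x)/(c+x)" using that c1 c0 cc
        by (simp add: divide_simps) (simp add: algebra_simps power2_eq_square mult_le_one)
      then show ?thesis unfolding fdef using c0 by (intro mult_left_mono power_mono) auto
    qed
    have lo2: "a^2 * c^2 \<le> (?F \<circ> ?F) x" if "0<x" for x
      using lo fpos that by simp
    have hi2: "(?F \<circ> ?F) x \<le> a^2 * (1/c)^2" if "0<x" for x
      using hi fpos that by simp
    have lop: "a^2 * c^2 > 0" using assms c0 by simp
    from iter_conv[of "?F \<circ> ?F", OF m2 lo2 lop hi2 y0]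
    show "convergent (\<lambda>n. ((?F \<circ> ?F) ^^ n) y0)" by blast
  qed
qed

end
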